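(* There exists an absolute constant $C>0$ such that for every nonempty set $J$ of positive integers, $$\int_0^1\Big|\sum_{n\in J}\frac{1}{n^2}\cos nt\Big|\,{\rm d}t\ \ge\ C\Big(\sum_{n\in J}\frac1{n^2}\Big)^2.$$ *)

theory Defs
  imports "HOL-Analysis.Analysis"
begin

end

theory Submission
  imports Defs
begin

lemma one_minus_cos_le: "1 - cos (x::real) \<le> x^2 / 2"
proof -
  have "cos x = 1 - 2 * sin (x/2)^2" using cos_double_sin[of "x/2"] by simp
  moreover have "sin (x/2)^2 \<le> (x/2)^2"
    using abs_sin_x_le_abs_x[of "x/2"] by (metis abs_ge_zero power2_abs power_mono)
  ultimately show ?thesis by (simp add: power_divide)
qed

lemma tail_bound:
  fixes M :: nat assumes M: "M \<ge> 1"
  shows "summable (\<lambda>n. 2 / (real (n+M))^2) \<and> (\<Sum>n. 2 / (real (n+M))^2) \<le> 4 / real M"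
proof -
  define g where "g n = 1 / real (n + M)" for n
  have "g \<longlonglongrightarrow> 0" unfolding g_def
    by (intro LIMSEQ_ignore_initial_segment[where k=M, simplified] lim_inverse_n')
  hence s: "(\<lambda>n. 4 * (g n - g (Suc n))) sums (4 * (g 0 - 0))"
    by (intro sums_mult telescope_sums')
  have le: "2 / (real (n+M))^2 \<le> 4 * (g n - g (Suc n))" for n
  proof -
    have p: "real (n+M) \<ge> 1" using M by simp
    have "g n - g (Suc n) = 1 / (real (n+M) * (real (n+M) + 1))"
      unfolding g_def using p by (simp add: field_simps)
    moreover have "2 / (real (n+M))^2 \<le> 4 / (real (n+M) * (real (n+M) + 1))"
    proof -
      have "\<And>x::real. x \<ge> 1 \<Longrightarrow> 2 / x^2 \<le> 4 / (x * (x+1))"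
        by (simp add: divide_simps power2_eq_square)
      thus ?thesis using p by blast
    qed
    ultimately show ?thesis by simp
  qed
  have sm: "summable (\<lambda>n. 2 / (real (n+M))^2)"
    by (rule summable_comparison_test[OF _ sums_summable[OF s]]) (use le in auto)
  have "(\<Sum>n. 2 / (real (n+M))^2) \<le> (\<Sum>n. 4 * (g n - g (Suc n)))"
    by (rule suminf_le[OF le sm sums_summable[OF s]])
  also have "\<dots> = 4 / real M" using sums_unique[OF s] by (simp add: g_def)
  finally show ?thesis using sm by simp
qed

lemma summable_inv_sq: "summable (\<lambda>n. 1 / (real n)^2)"
  using inverse_power_summable[of 2, where 'a=real] by (simp add: inverse_eq_divide)

lemma pointwise:
  fixes h :: "nat \<Rightarrow> real" and t :: real
  assumes h0: "\<And>n. 0 \<le> h n" and h1: "\<And>n. h n \<le> 1 / (real n)^2"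
    and t0: "0 \<le> t" and t1: "t \<le> 1"
  shows "summable (\<lambda>n. h n * (1 - cos (real n * t))) \<and>
         (\<Sum>n. h n * (1 - cos (real n * t))) \<le> 5 * t"
proof -
  define a where "a n = h n * (1 - cos (real n * t))" for n
  have a0: "0 \<le> a n" for n unfolding a_def using h0[of n] by simp
  have a2: "a n \<le> 2 / (real n)^2" for n
  proof -
    have "a n \<le> h n * 2" unfolding a_def
      using h0[of n] cos_ge_minus_one[of "real n * t"] by (intro mult_left_mono) linarith+
    thus ?thesis using h1[of n] by simp
  qed
  have sa: "summable a"
    by (rule summable_comparison_test[OF _ summable_mult[OF summable_inv_sq, of 2]])
       (use a0 a2 in auto)
  have a3: "a n \<le> t^2 / 2" for n
  proof (cases "n = 0")
    case True then show ?thesis using h1[of 0] h0[of 0] by (simp add: a_def)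
  next
    case False
    have "a n \<le> (1 / (real n)^2) * ((real n * t)^2 / 2)" unfolding a_def
      by (rule mult_mono) (use h1[of n] h0[of n] one_minus_cos_le[of "real n * t"] in auto)
    also have "\<dots> = t^2 / 2" using False by (simp add: power_mult_distrib)
    finally show ?thesis .
  qed
  show ?thesis
  proof (cases "t = 0")
    case True
    then show ?thesis by (simp add: a_def[symmetric])
  next
    case False
    hence tp: "t > 0" using t0 by simp
    define M where "M = nat \<lceil>1 / t\<rceil>"
    have it: "1 / t > 0" using tp by simp
    have "\<lceil>1 / t\<rceil> \<ge> 0" using it by linarith
    hence Mr: "real M = of_int \<lceil>1 / t\<rceil>" unfolding M_def by simp
    have M1: "real M \<ge> 1 / t" unfolding Mr by linarith
    have M2: "real M \<le> 1 / t + 1" unfolding Mr by linarith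
    have "1 / t \<ge> 1" using tp t1 by simp
    hence "real M \<ge> 1" using M1 by linarith
    hence Mge: "M \<ge> 1" by simp
    have "suminf a = (\<Sum>n. a (n + M)) + (\<Sum>i<M. a i)"
      by (rule suminf_split_initial_segment[OF sa])
    also have "(\<Sum>n. a (n + M)) \<le> (\<Sum>n. 2 / (real (n+M))^2)"
    proof (rule suminf_le)
      show "a (n + M) \<le> 2 / (real (n+M))^2" for n using a2[of "n+M"] .
      show "summable (\<lambda>n. a (n + M))" using sa by (simp add: summable_iff_shift)
      show "summable (\<lambda>n. 2 / (real (n+M))^2)" using tail_bound[OF Mge] by blast
    qed
    also have "\<dots> \<le> 4 / real M" using tail_bound[OF Mge] by simp
    also have "4 / real M \<le> 4 * t"
    proof -
      have "4 / real M \<le> 4 / (1/t)" by (rule divide_left_mono) (use M1 it Mge in auto)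
      thus ?thesis by simp
    qed
    also have "(\<Sum>i<M. a i) \<le> (\<Sum>i<M. t^2 / 2)" by (rule sum_mono) (rule a3)
    also have "\<dots> = real M * t^2 / 2" by simp
    also have "\<dots> \<le> (1 / t + 1) * t^2 / 2"
      by (intro divide_right_mono mult_right_mono M2) auto
    also have "\<dots> = t / 2 + t^2 / 2" using tp by (simp add: field_simps power2_eq_square)
    finally have "suminf a \<le> 4 * t + (t / 2 + t^2 / 2)" by simp
    moreover have "t^2 \<le> t" using t0 t1 mult_left_le_one_le[of t t] by (simp add: power2_eq_square)
    ultimately show ?thesis using sa unfolding a_def by simp
  qed
qed

lemma infsum_as_suminf:
  fixes g :: "nat \<Rightarrow> real" and J :: "nat set"
  assumes "summable (\<lambda>n. norm (if n \<in> J then g n else 0))"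
  shows "(\<Sum>\<^sub>\<infinity>n\<in>J. g n) = (\<Sum>n. if n \<in> J then g n else 0)"
proof -
  have "(\<Sum>\<^sub>\<infinity>n\<in>J. g n) = (\<Sum>\<^sub>\<infinity>n\<in>UNIV. if n \<in> J then g n else 0)"
    by (rule infsum_cong_neutral) auto
  also have "\<dots> = (\<Sum>n. if n \<in> J then g n else 0)"
    by (rule infsumI, rule norm_summable_imp_has_sum[OF assms summable_sums])
       (rule summable_norm_cancel[OF assms])
  finally show ?thesis .
qed

lemma sum_inv_sq_le2: "(\<Sum>n. 1 / (real n)^2) \<le> 2"
proof -
  have "(\<Sum>n. 1 / (real n)^2) = (\<Sum>n. 1 / (real (n+1))^2) + (\<Sum>i<1. 1 / (real i)^2)"
    by (rule suminf_split_initial_segment[OF summable_inv_sq])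
  also have "\<dots> = (\<Sum>n. 1 / (real (n+1))^2)" by simp
  also have "\<dots> = (\<Sum>n. 2 / (real (n+1))^2) / 2"
    using suminf_divide[OF conjunct1[OF tail_bound[of 1]], of 2] by simp
  also have "\<dots> \<le> 2" using tail_bound[of 1] by simp
  finally show ?thesis .
qed

theorem mainTheorem11:
  shows "\<exists>C>0. \<forall>J :: nat set. J \<noteq> {} \<and> 0 \<notin> J \<longrightarrow>
    integral {0..1} (\<lambda>t::real. \<bar>\<Sum>\<^sub>\<infinity>n\<in>J. cos (real n * t) / (real n)^2\<bar>)
      \<ge> C * (\<Sum>\<^sub>\<infinity>n\<in>J. 1 / (real n)^2)^2"
proof (intro exI[of _ "1/20"] conjI allI impI)
  fix J :: "nat set" assume JJ: "J \<noteq> {} \<and> 0 \<notin> J"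
  define h where "h n = (if n \<in> J then 1 / (real n)^2 else 0)" for n
  have h0: "0 \<le> h n" for n by (simp add: h_def)
  have h1: "h n \<le> 1 / (real n)^2" for n by (simp add: h_def)
  have sh: "summable h"
    by (rule summable_comparison_test[OF _ summable_inv_sq]) (use h0 h1 in auto)
  define S where "S = suminf h"
  have Seq: "(\<Sum>\<^sub>\<infinity>n\<in>J. 1 / (real n)^2) = S"
    unfolding S_def h_def by (rule infsum_as_suminf) (use sh[unfolded h_def] in simp)
  define f where "f t = (\<Sum>n. h n * cos (real n * t))" for t
  have sf: "summable (\<lambda>n. norm (h n * cos (real n * t)))" for t
    by (rule summable_comparison_test[OF _ sh])
       (use h0 in \<open>auto simp: abs_mult intro!: mult_left_le[OF abs_cos_le_one]\<close>)
  have feq: "(\<Sum>\<^sub>\<infinity>n\<in>J. cos (real n * t) / (real n)^2) = f t" for t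
  proof -
    have e: "(if n \<in> J then cos (real n * t) / (real n)^2 else 0) = h n * cos (real n * t)" for n
      by (simp add: h_def)
    show ?thesis unfolding f_def using infsum_as_suminf[of J "\<lambda>n. cos (real n * t) / (real n)^2"] sf[of t]
      by (simp only: e)
  qed
  obtain m where m: "m \<in> J" using JJ by blast
  have "m \<noteq> 0" using m JJ by auto
  hence "h m > 0" using m by (simp add: h_def)
  moreover have "h m \<le> S" unfolding S_def
    using sum_le_suminf[OF sh, of "{m}"] h0 by simp
  ultimately have Spos: "S > 0" by simp
  have Sle: "S \<le> 2" unfolding S_def
    using suminf_le[OF h1 sh summable_inv_sq] sum_inv_sq_le2 by linarith
  have fbound: "f t \<ge> S - 5 * t" if "0 \<le> t" "t \<le> 1" for t
  proof -
    have P: "summable (\<lambda>n. h n * (1 - cos (real n * t)))"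
        "(\<Sum>n. h n * (1 - cos (real n * t))) \<le> 5 * t"
      using pointwise[OF h0 h1 that] by auto
    have "S - f t = (\<Sum>n. h n - h n * cos (real n * t))" unfolding S_def f_def
      by (rule suminf_diff[OF sh summable_norm_cancel[OF sf]])
    also have "\<dots> = (\<Sum>n. h n * (1 - cos (real n * t)))" by (simp add: algebra_simps)
    finally show ?thesis using P by simp
  qed
  have cf: "continuous_on {0..1} f"
  proof (rule uniform_limit_theorem[where F=sequentially])
    show "\<forall>\<^sub>F n in sequentially. continuous_on {0..1} (\<lambda>t. \<Sum>i<n. h i * cos (real i * t))"
      by (intro always_eventually allI) (auto intro!: continuous_intros)
    show "uniform_limit {0..1} (\<lambda>n t. \<Sum>i<n. h i * cos (real i * t)) f sequentially"
      unfolding f_def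
      by (rule Weierstrass_m_test[OF _ sh])
         (use h0 in \<open>auto simp: abs_mult intro!: mult_left_le[OF abs_cos_le_one]\<close>)
  qed simp
  define F where "F t = \<bar>f t\<bar>" for t
  have cF: "continuous_on {0..1} F" unfolding F_def by (intro continuous_intros cf)
  define t0 where "t0 = S / 10"
  have t0: "0 \<le> t0" "t0 \<le> 1" using Spos Sle by (auto simp: t0_def)
  have iF: "F integrable_on {0..1}" by (rule integrable_continuous_interval[OF cF])
  have iF1: "F integrable_on {0..t0}"
    by (rule integrable_continuous_interval, rule continuous_on_subset[OF cF]) (use t0 in auto)
  have iF2: "F integrable_on {t0..1}"
    by (rule integrable_continuous_interval, rule continuous_on_subset[OF cF]) (use t0 in auto)
  have "integral {0..t0} (\<lambda>_. S / 2) \<le> integral {0..t0} F"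
  proof (rule integral_le[OF _ iF1])
    show "(\<lambda>_. S / 2) integrable_on {0..t0}" by blast
    fix x assume x: "x \<in> {0..t0}"
    hence "f x \<ge> S - 5 * x" using fbound t0 by auto
    moreover have "5 * x \<le> S / 2" using x by (auto simp: t0_def)
    ultimately show "S / 2 \<le> F x" unfolding F_def by linarith
  qed
  moreover have "integral {0..t0} (\<lambda>_. S / 2) = S^2 / 20"
    using t0 by (simp add: t0_def power2_eq_square)
  moreover have "0 \<le> integral {t0..1} F" by (rule integral_nonneg[OF iF2]) (simp add: F_def)
  moreover have "integral {0..t0} F + integral {t0..1} F = integral {0..1} F"
    by (rule Henstock_Kurzweil_Integration.integral_combine[OF t0 iF])
  ultimately have "integral {0..1} F \<ge> 1/20 * S^2" by linarith
  thus "integral {0..1} (\<lambda>t::real. \<bar>\<Sum>\<^sub>\<infinity>n\<in>J. cos (real n * t) / (real n)^2\<bar>)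
      \<ge> 1/20 * (\<Sum>\<^sub>\<infinity>n\<in>J. 1 / (real n)^2)^2"
    unfolding Seq feq F_def by simp
qed simp

end
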